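(* Let $\varphi=\frac{1+\sqrt5}{2}$, $F_n=\frac{\varphi^n-(-1/\varphi)^n}{\varphi+1/\varphi}$, $F_0!=1$, $F_n!=F_1\cdots F_n$. For commuting variables $x,y$ and $n\ge1$ let $(x+y)_F^n=\prod_{k=0}^{n-1}(x+(-1)^k\varphi^{n-1-2k}y)$, $(x+y)_F^0=1$, and let $(x-y)_F^n$ denote the same expression with $y$ replaced by $-y$. Let $D_F^x$ (resp. $D_F^y$) be the Golden derivative in $x$ (resp. $y$), acting on polynomials as the linear operator with $D_F^x x^m=F_mx^{m-1}$ ($m\ge1$), $D_F^x1=0$, other variables treated as constants (for nonzero argument this coincides with $D_F^xf(x)=\frac{f(\varphi x)-f(-x/\varphi)}{(\varphi+1/\varphi)x}$). Then for every $n\ge1$: $$D_F^x(x+y)_F^n=F_n(x+y)_F^{n-1},\qquad D_F^y(x+y)_F^n=F_n(x-y)_F^{n-1},$$ and for every $k\ge0$, $$(D_F^y)^{2k}(x+y)_F^{2k}=(-1)^kF_{2k}!,\qquad (D_F^y)^{2k+1}(x+y)_F^{2k+1}=(-1)^kF_{2k+1}!.$$ *)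

theory Defs
  imports Complex_Main "HOL-Computational_Algebra.Polynomial"
begin

definition gphi :: real where "gphi = (1 + sqrt 5) / 2"

definition gF :: "nat \<Rightarrow> real" where
  "gF n = (gphi ^ n - (-1 / gphi) ^ n) / (gphi + 1 / gphi)"

definition gFfact :: "nat \<Rightarrow> real" where
  "gFfact n = (\<Prod>i\<in>{1..n}. gF i)"

definition gderiv :: "real poly \<Rightarrow> real poly" where
  "gderiv p = (\<Sum>m\<in>{1..degree p}. monom (gF m * coeff p m) (m - 1))"

text \<open>Two-variable polynomials in x, y are represented as polynomials in x
  whose coefficients are real polynomials in y (type real poly poly).\<close>

definition gderiv_x :: "real poly poly \<Rightarrow> real poly poly" where
  "gderiv_x P = (\<Sum>m\<in>{1..degree P}. monom (smult (gF m) (coeff P m)) (m - 1))"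

definition gderiv_y :: "real poly poly \<Rightarrow> real poly poly" where
  "gderiv_y P = map_poly gderiv P"

text \<open>(x + s y)_F^n = prod_{k<n} (x + (-1)^k phi^(n-1-2k) s y); s = 1 gives (x+y)_F^n,
  s = -1 gives (x-y)_F^n. Empty product (n = 0) is 1.\<close>
definition gbinom :: "real \<Rightarrow> nat \<Rightarrow> real poly poly" where
  "gbinom s n = (\<Prod>k<n. [: [:0, s * (-1) ^ k * gphi powi (int n - 1 - 2 * int k):], 1 :])"

end

theory Submission
  imports Defs
begin

lemma gphi_pos: "gphi > 0" unfolding gphi_def by (simp add: add_pos_nonneg)

definition cc :: real where "cc = gphi + 1/gphi"

lemma cc_pos: "cc > 0" using gphi_pos unfolding cc_def by (simp add: add_pos_pos)

lemma gF_cc: "gF m * cc = gphi^m - (-1/gphi)^m"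
  using cc_pos unfolding gF_def cc_def by simp

lemma key_sum:
  fixes a :: "nat \<Rightarrow> real"
  shows "(\<Sum>m\<in>{1..d}. gF m * a m * z^(m-1)) * (cc*z)
     = (\<Sum>i\<le>d. a i * (gphi*z)^i) - (\<Sum>i\<le>d. a i * (-z/gphi)^i)"
proof -
  have pw: "z^(m-1)*z = z^m" if "m\<ge>1" for m using that by (cases m) auto
  have "(\<Sum>m\<in>{1..d}. gF m * a m * z^(m-1)) * (cc*z) = (\<Sum>m\<in>{1..d}. a m * (gF m * cc) * z^m)"
    unfolding sum_distrib_right
  proof (rule sum.cong)
    fix m assume "m \<in> {1..d}"
    hence "z^(m-1)*z = z^m" using pw by auto
    thus "gF m * a m * z ^ (m - 1) * (cc * z) = a m * (gF m * cc) * z ^ m"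
      by (metis (no_types, opaque_lifting) mult.commute mult.left_commute)
  qed simp
  also have "\<dots> = (\<Sum>i\<in>{1..d}. a i * ((gphi*z)^i - (-z/gphi)^i))"
  proof (rule sum.cong)
    fix m
    have "-z/gphi = (-1/gphi)*z" by simp
    then show "a m * (gF m * cc) * z ^ m = a m * ((gphi * z) ^ m - (- z / gphi) ^ m)"
      unfolding gF_cc by (simp only: power_mult_distrib) (simp add: algebra_simps)
  qed simp
  also have "\<dots> = (\<Sum>i\<le>d. a i * ((gphi*z)^i - (-z/gphi)^i))"
  proof -
    have "{..d} = insert 0 {1..d}" by auto
    thus ?thesis by simp
  qed
  finally show ?thesis by (simp add: sum_subtractf right_diff_distrib)
qed

definition ev :: "real poly poly \<Rightarrow> real \<Rightarrow> real \<Rightarrow> real" where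
  "ev P x y = poly (poly P [:x:]) y"

lemma ev_alt: "ev P x y = poly (map_poly (\<lambda>q. poly q y) P) x"
  unfolding ev_def by (induction P) (simp_all add: map_poly_pCons)

lemma ev_monom: "ev (monom a n) x y = poly a y * x^n"
  unfolding ev_def by (simp add: poly_monom poly_power)

lemma ev_sum_gen: "ev (\<Sum>i\<in>A. f i) x y = (\<Sum>i\<in>A. ev (f i) x y)"
  unfolding ev_def by (simp add: poly_sum)

lemma ev_sum: assumes "degree P \<le> N" shows "ev P x y = (\<Sum>i\<le>N. poly (coeff P i) y * x^i)"
proof -
  have "ev P x y = ev (\<Sum>i\<le>N. monom (coeff P i) i) x y" using poly_as_sum_of_monoms'[OF assms] by simp
  thus ?thesis by (simp add: ev_sum_gen ev_monom)
qed

lemma ev_smult: "ev (smult [:a:] P) x y = a * ev P x y"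
  unfolding ev_def by simp

lemma zero_off0: fixes p :: "real poly" assumes "\<forall>z. z\<noteq>0 \<longrightarrow> poly p z = 0" shows "p = 0"
proof -
  have "\<forall>z. poly (p * [:0,1:]) z = 0" using assms by auto
  hence "p * [:0,1:] = 0" using poly_all_0_iff_0 by blast
  thus ?thesis by simp
qed

lemma ev_unique: assumes "\<forall>x y. x\<noteq>0 \<longrightarrow> y\<noteq>0 \<longrightarrow> ev P x y = ev Q x y" shows "P = Q"
proof -
  define R where "R = P - Q"
  have r: "ev R x y = 0" if "x\<noteq>0" "y\<noteq>0" for x y  using assms that by (simp add: R_def ev_def)
  have m: "map_poly (\<lambda>q. poly q y) R = 0" if "y\<noteq>0" for y
    apply (rule zero_off0) using r that by (simp add: ev_alt)
  have "coeff R i = 0" for i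
  proof (rule zero_off0, intro allI impI)
    fix y::real assume "y\<noteq>0"
    have "coeff (map_poly (\<lambda>q. poly q y) R) i = 0" using m[OF \<open>y\<noteq>0\<close>] by simp
    thus "poly (coeff R i) y = 0" by (simp add: coeff_map_poly)
  qed
  hence "R = 0" by (simp add: poly_eq_iff)
  thus ?thesis by (simp add: R_def)
qed

lemma gderiv_char: "poly (gderiv p) y * (cc*y) = poly p (gphi*y) - poly p (-y/gphi)"
  using key_sum[where a="coeff p" and d="degree p" and z=y]
  unfolding gderiv_def poly_sum poly_monom poly_altdef[of p] by (simp add: mult.assoc)

lemma gderiv_0: "gderiv 0 = 0" by (simp add: gderiv_def)

lemma ev_gderiv_y: "ev (gderiv_y P) x y * (cc*y) = ev P x (gphi*y) - ev P x (-y/gphi)"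
proof -
  have d: "degree (gderiv_y P) \<le> degree P" unfolding gderiv_y_def by (rule map_poly_degree_leq)
  have "ev (gderiv_y P) x y * (cc*y) = (\<Sum>i\<le>degree P. poly (gderiv (coeff P i)) y * (cc*y) * x^i)"
    unfolding ev_sum[OF d] sum_distrib_right
    by (simp add: gderiv_y_def coeff_map_poly gderiv_0 algebra_simps)
  also have "\<dots> = (\<Sum>i\<le>degree P. (poly (coeff P i) (gphi*y) - poly (coeff P i) (-y/gphi)) * x^i)"
    by (simp add: gderiv_char)
  also have "\<dots> = ev P x (gphi*y) - ev P x (-y/gphi)"
    by (simp add: ev_sum[of P "degree P"] sum_subtractf left_diff_distrib)
  finally show ?thesis .
qed

lemma ev_gderiv_x: "ev (gderiv_x P) x y * (cc*x) = ev P (gphi*x) y - ev P (-x/gphi) y"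
proof -
  have "ev (gderiv_x P) x y = (\<Sum>m\<in>{1..degree P}. gF m * poly (coeff P m) y * x^(m-1))"
    unfolding gderiv_x_def ev_sum_gen ev_monom by simp
  thus ?thesis using key_sum[where a="\<lambda>m. poly (coeff P m) y" and d="degree P" and z=x]
    by (simp add: ev_sum[of P "degree P"] mult_ac)
qed

lemma gderiv_y_eq:
  assumes "\<forall>x y. ev Q x y * (cc*y) = ev P x (gphi*y) - ev P x (-y/gphi)"
  shows "gderiv_y P = Q"
proof (rule ev_unique, intro allI impI)
  fix x y :: real assume "x \<noteq> 0" "y \<noteq> 0"
  hence "cc*y \<noteq> 0" using cc_pos by simp
  moreover have "ev (gderiv_y P) x y * (cc*y) = ev Q x y * (cc*y)"
    using assms ev_gderiv_y by simp
  ultimately show "ev (gderiv_y P) x y = ev Q x y" by simp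
qed

lemma gderiv_x_eq:
  assumes "\<forall>x y. ev Q x y * (cc*x) = ev P (gphi*x) y - ev P (-x/gphi) y"
  shows "gderiv_x P = Q"
proof (rule ev_unique, intro allI impI)
  fix x y :: real assume "x \<noteq> 0" "y \<noteq> 0"
  hence "cc*x \<noteq> 0" using cc_pos by simp
  moreover have "ev (gderiv_x P) x y * (cc*x) = ev Q x y * (cc*x)"
    using assms ev_gderiv_x by simp
  ultimately show "ev (gderiv_x P) x y = ev Q x y" by simp
qed


definition g :: "real \<Rightarrow> nat \<Rightarrow> real \<Rightarrow> real \<Rightarrow> real" where
  "g s n x y = (\<Prod>k<n. x + s * (-1)^k * gphi powi (int n - 1 - 2 * int k) * y)"

lemma ev_gbinom: "ev (gbinom s n) x y = g s n x y"
  unfolding ev_def gbinom_def g_def poly_prod by (simp add: algebra_simps)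

lemma powi_m1: "gphi powi (a - 1) = gphi powi a / gphi"
  using gphi_pos by (simp add: power_int_diff)

lemma gY_A: "g s (Suc m) x (gphi*y) = (x + s*gphi^(Suc m)*y) * g (-s) m x y"
proof -
  have "g s (Suc m) x (gphi*y) = (x + s*gphi^m*(gphi*y)) *
     (\<Prod>k<m. x + s * (-1)^(Suc k) * gphi powi (int (Suc m) - 1 - 2 * int (Suc k)) * (gphi*y))"
    unfolding g_def prod.lessThan_Suc_shift by simp
  also have "(\<Prod>k<m. x + s * (-1)^(Suc k) * gphi powi (int (Suc m) - 1 - 2 * int (Suc k)) * (gphi*y))
     = g (-s) m x y"
    unfolding g_def
  proof (rule prod.cong)
    fix k
    have eq: "int (Suc m) - 1 - 2 * int (Suc k) = (int m - 1 - 2 * int k) - 1" by simp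
    have "gphi powi (int (Suc m) - 1 - 2 * int (Suc k)) = gphi powi (int m - 1 - 2 * int k) / gphi"
      unfolding eq by (rule powi_m1)
    hence h: "gphi powi (int (Suc m) - 1 - 2 * int (Suc k)) * gphi = gphi powi (int m - 1 - 2 * int k)"
      using gphi_pos by simp
    thus "x + s * (-1)^(Suc k) * gphi powi (int (Suc m) - 1 - 2 * int (Suc k)) * (gphi*y)
       = x + - s * (-1)^k * gphi powi (int m - 1 - 2 * int k) * y"
      unfolding h[symmetric] by (simp add: algebra_simps)
  qed simp
  finally show ?thesis by (simp add: mult_ac)
qed

lemma gY_B: "g s (Suc m) x (-y/gphi) = g (-s) m x y * (x + s*(-1)^m * inverse (gphi^m) * (-y/gphi))"
proof -
  have e: "int (Suc m) - 1 - 2 * int m = - int m" by simp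
  have "g s (Suc m) x (-y/gphi) = 
     (\<Prod>k<m. x + s * (-1)^k * gphi powi (int (Suc m) - 1 - 2 * int k) * (-y/gphi)) * 
      (x + s*(-1)^m * inverse (gphi^m) * (-y/gphi))"
    unfolding g_def prod.lessThan_Suc e by (simp add: power_int_minus)
  also have "(\<Prod>k<m. x + s * (-1)^k * gphi powi (int (Suc m) - 1 - 2 * int k) * (-y/gphi))
     = g (-s) m x y"
    unfolding g_def
  proof (rule prod.cong)
    fix k
    have eq: "int m - 1 - 2 * int k = (int (Suc m) - 1 - 2 * int k) - 1" by simp
    have h: "gphi powi (int (Suc m) - 1 - 2 * int k) / gphi = gphi powi (int m - 1 - 2 * int k)"
      unfolding eq by (rule powi_m1[symmetric])
    thus "x + s * (-1)^k * gphi powi (int (Suc m) - 1 - 2 * int k) * (-y/gphi)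
       = x + - s * (-1)^k * gphi powi (int m - 1 - 2 * int k) * y"
      unfolding h[symmetric] by (simp add: algebra_simps)
  qed simp
  finally show ?thesis .
qed

lemma gY: "g s (Suc m) x (gphi*y) - g s (Suc m) x (-y/gphi) = (s * gF (Suc m) * g (-s) m x y) * (cc*y)"
proof -
  have "(s * gF (Suc m) * g (-s) m x y) * (cc*y) = s * (gF (Suc m) * cc) * g (-s) m x y * y"
    by (simp add: mult_ac)
  also have "\<dots> = s * (gphi^Suc m - (-1/gphi)^Suc m) * g (-s) m x y * y" by (simp only: gF_cc)
  also have "(-1/gphi)^Suc m = - ((-1)^m * inverse (gphi^m) / gphi)"
    unfolding power_Suc power_divide by (simp add: divide_inverse mult_ac)
  finally have r: "(s * gF (Suc m) * g (-s) m x y) * (cc*y)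
      = s * (gphi^Suc m + (-1)^m * inverse (gphi^m) / gphi) * g (-s) m x y * y" by simp
  show ?thesis unfolding gY_A gY_B r by (simp add: divide_inverse ring_distribs mult_ac)
qed


lemma gX_A: "g s (Suc m) (gphi*x) y = gphi^Suc m * (g s m x y * (x + s*(-1)^m*(inverse(gphi^m)/gphi)*y))"
proof -
  have e: "int (Suc m) - 1 - 2 * int m = - int m" by simp
  have "g s (Suc m) (gphi*x) y = 
     (\<Prod>k<m. gphi*x + s * (-1)^k * gphi powi (int (Suc m) - 1 - 2 * int k) * y) * 
      (gphi*x + s*(-1)^m * inverse (gphi^m) * y)"
    unfolding g_def prod.lessThan_Suc e by (simp add: power_int_minus)
  also have "(\<Prod>k<m. gphi*x + s * (-1)^k * gphi powi (int (Suc m) - 1 - 2 * int k) * y)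
     = (\<Prod>k<m. gphi * (x + s * (-1)^k * gphi powi (int m - 1 - 2 * int k) * y))"
  proof (rule prod.cong)
    fix k
    have eq: "int (Suc m) - 1 - 2 * int k = (int m - 1 - 2 * int k) + 1" by simp
    have h: "gphi powi (int (Suc m) - 1 - 2 * int k) = gphi powi (int m - 1 - 2 * int k) * gphi"
      unfolding eq apply (rule power_int_add_1) using gphi_pos by simp
    show "gphi*x + s * (-1)^k * gphi powi (int (Suc m) - 1 - 2 * int k) * y
       = gphi * (x + s * (-1)^k * gphi powi (int m - 1 - 2 * int k) * y)"
      unfolding h by (simp add: algebra_simps)
  qed simp
  also have "\<dots> = gphi^m * g s m x y"
    unfolding g_def prod.distrib by simp
  also have "gphi*x + s*(-1)^m * inverse (gphi^m) * y = gphi * (x + s*(-1)^m*(inverse(gphi^m)/gphi)*y)"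
    using gphi_pos by (simp add: algebra_simps)
  finally show ?thesis by (simp add: mult_ac)
qed

lemma gX_B: "g s (Suc m) (-x/gphi) y = (-1/gphi)^Suc m * ((x - s*gphi^Suc m*y) * g s m x y)"
proof -
  have "g s (Suc m) (-x/gphi) y = (-x/gphi + s*gphi^m*y) *
     (\<Prod>k<m. -x/gphi + s * (-1)^(Suc k) * gphi powi (int (Suc m) - 1 - 2 * int (Suc k)) * y)"
    unfolding g_def prod.lessThan_Suc_shift by simp
  also have "(\<Prod>k<m. -x/gphi + s * (-1)^(Suc k) * gphi powi (int (Suc m) - 1 - 2 * int (Suc k)) * y)
     = (\<Prod>k<m. (-1/gphi) * (x + s * (-1)^k * gphi powi (int m - 1 - 2 * int k) * y))"
  proof (rule prod.cong)
    fix k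
    have eq: "int (Suc m) - 1 - 2 * int (Suc k) = (int m - 1 - 2 * int k) - 1" by simp
    have h: "gphi powi (int (Suc m) - 1 - 2 * int (Suc k)) = gphi powi (int m - 1 - 2 * int k) / gphi"
      unfolding eq by (rule powi_m1)
    show "-x/gphi + s * (-1)^(Suc k) * gphi powi (int (Suc m) - 1 - 2 * int (Suc k)) * y
       = (-1/gphi) * (x + s * (-1)^k * gphi powi (int m - 1 - 2 * int k) * y)"
      unfolding h by (simp add: algebra_simps)
  qed simp
  also have "\<dots> = (-1/gphi)^m * g s m x y"
    unfolding g_def prod.distrib by simp
  also have "-x/gphi + s*gphi^m*y = (-1/gphi) * (x - s*gphi^Suc m*y)"
    using gphi_pos by (simp add: algebra_simps)
  finally show ?thesis by (simp add: mult_ac)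
qed

lemma alg: fixes P Q I e G x y s :: real
  assumes "P*I = 1" "Q*P = -e"
  shows "P*(G*(x + s*e*I*y)) - Q*((x - s*P*y)*G) = (P-Q)*x*G"
proof -
  have "P*(G*(x + s*e*I*y)) - Q*((x - s*P*y)*G) = (P-Q)*x*G + s*e*y*G*(P*I) + s*y*G*(Q*P)"
    by (simp add: algebra_simps)
  thus ?thesis using assms by simp
qed

lemma gX: "g s (Suc m) (gphi*x) y - g s (Suc m) (-x/gphi) y = (gF (Suc m) * g s m x y) * (cc*x)"
proof -
  have 1: "gphi^Suc m * (inverse(gphi^m)/gphi) = 1" using gphi_pos by simp
  have 2: "(-1/gphi)^Suc m * gphi^Suc m = - ((-1)^m)"
    unfolding power_mult_distrib[symmetric] using gphi_pos by simp
  have "(gF (Suc m) * g s m x y) * (cc*x) = (gF (Suc m) * cc) * x * g s m x y" by (simp add: mult_ac)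
  also have "\<dots> = (gphi^Suc m - (-1/gphi)^Suc m) * x * g s m x y" by (simp only: gF_cc)
  finally have A: "(gF (Suc m) * g s m x y) * (cc*x) = (gphi^Suc m - (-1/gphi)^Suc m) * x * g s m x y" .
  have B: "g s (Suc m) (gphi*x) y - g s (Suc m) (-x/gphi) y
     = (gphi^Suc m - (-1/gphi)^Suc m) * x * g s m x y"
    unfolding gX_A gX_B by (rule alg[OF 1 2])
  show ?thesis by (simp only: A B)
qed


lemma dy: assumes "n \<ge> 1" shows "gderiv_y (gbinom s n) = smult [:s * gF n:] (gbinom (-s) (n-1))"
proof -
  obtain m where n: "n = Suc m" using assms by (cases n) auto
  show ?thesis unfolding n
    by (rule gderiv_y_eq, intro allI) (simp only: ev_smult ev_gbinom gY diff_Suc_1)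
qed

lemma dx: assumes "n \<ge> 1" shows "gderiv_x (gbinom s n) = smult [:gF n:] (gbinom s (n-1))"
proof -
  obtain m where n: "n = Suc m" using assms by (cases n) auto
  show ?thesis unfolding n
    by (rule gderiv_x_eq, intro allI) (simp only: ev_smult ev_gbinom gX diff_Suc_1)
qed

lemma dy_lin: "gderiv_y (smult [:a:] P) = smult [:a:] (gderiv_y P)"
  by (rule gderiv_y_eq, intro allI) (simp only: ev_smult mult.assoc ev_gderiv_y right_diff_distrib)

lemma dy_pow_lin: "(gderiv_y ^^ n) (smult [:a:] P) = smult [:a:] ((gderiv_y ^^ n) P)"
  by (induction n) (simp_all add: dy_lin)

lemma gbinom_0: "gbinom s 0 = 1" by (simp add: gbinom_def)

lemma sign_lemma: "(-1::real)^n * (-1)^(n div 2) = (-1)^(Suc n div 2)"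
proof (cases "even n")
  case True
  then obtain k where "n = 2*k" by blast
  thus ?thesis by simp
next
  case False
  then obtain k where "n = 2*k+1" using oddE by blast
  thus ?thesis by (simp add: power_add)
qed

lemma iter: "(gderiv_y ^^ n) (gbinom s n) = [:[: s^n * (-1)^(n div 2) * gFfact n :]:]"
proof (induction n arbitrary: s)
  case 0
  show ?case by (simp add: gbinom_0 gFfact_def one_pCons)
next
  case (Suc n)
  have f: "gFfact (Suc n) = gF (Suc n) * gFfact n"
    unfolding gFfact_def by (simp add: prod.nat_ivl_Suc')
  have "(gderiv_y ^^ Suc n) (gbinom s (Suc n)) = (gderiv_y ^^ n) (gderiv_y (gbinom s (Suc n)))"
    by (simp only: funpow_Suc_right o_apply)
  also have "\<dots> = smult [:s * gF (Suc n):] [:[: (-s)^n * (-1)^(n div 2) * gFfact n :]:]"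
  proof -
    have "gderiv_y (gbinom s (Suc n)) = smult [:s * gF (Suc n):] (gbinom (-s) (Suc n - 1))"
      by (rule dy) simp
    hence "gderiv_y (gbinom s (Suc n)) = smult [:s * gF (Suc n):] (gbinom (-s) n)" by simp
    thus ?thesis by (simp only: dy_pow_lin Suc.IH)
  qed
  also have "\<dots> = [:[: s * gF (Suc n) * ((-s)^n * (-1)^(n div 2) * gFfact n) :]:]"
    by simp
  also have "s * gF (Suc n) * ((-s)^n * (-1)^(n div 2) * gFfact n)
      = s^Suc n * ((-1)^n * (-1)^(n div 2)) * (gF (Suc n) * gFfact n)"
    unfolding power_minus[of s n] power_Suc by (simp only: mult_ac)
  finally show ?case unfolding f sign_lemma .
qed

theorem mainTheorem11:
  shows "(\<forall>n::nat. n \<ge> 1 \<longrightarrow>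
            gderiv_x (gbinom 1 n) = smult [:gF n:] (gbinom 1 (n - 1)) \<and>
            gderiv_y (gbinom 1 n) = smult [:gF n:] (gbinom (-1) (n - 1)))
       \<and> (\<forall>k::nat.
            (gderiv_y ^^ (2 * k)) (gbinom 1 (2 * k)) = [:[: (-1) ^ k * gFfact (2 * k) :]:] \<and>
            (gderiv_y ^^ (2 * k + 1)) (gbinom 1 (2 * k + 1)) = [:[: (-1) ^ k * gFfact (2 * k + 1) :]:])"
proof (intro conjI allI impI)
  fix n :: nat assume "n \<ge> 1"
  show "gderiv_x (gbinom 1 n) = smult [:gF n:] (gbinom 1 (n - 1))" using dx[OF \<open>n \<ge> 1\<close>] .
  show "gderiv_y (gbinom 1 n) = smult [:gF n:] (gbinom (-1) (n - 1))" using dy[OF \<open>n \<ge> 1\<close>, of 1] by simp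
next
  fix k :: nat
  show "(gderiv_y ^^ (2 * k)) (gbinom 1 (2 * k)) = [:[: (-1) ^ k * gFfact (2 * k) :]:]"
    using iter[of "2*k" 1] by simp
  show "(gderiv_y ^^ (2 * k + 1)) (gbinom 1 (2 * k + 1)) = [:[: (-1) ^ k * gFfact (2 * k + 1) :]:]"
    using iter[of "2*k+1" 1] by simp
qed

end
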